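(* Let $a,b$ be distinct positive real numbers and write $A=A(a,b)$, $G=G(a,b)$, $L=L(a,b)$, $I=I(a,b)$. Then $$L(A^2,G^2)=\frac{A+G}{2}\,L(A,G)>\frac{A+G}{2}\,L>L^2,$$ $$L(I,G)<L,$$ $$L<L(I,L)<L\cdot\frac{I-L}{L-G}.$$
   Context: For positive reals $x\neq y$: $A(x,y)=\frac{x+y}{2}$, $G(x,y)=\sqrt{xy}$, logarithmic mean $L(x,y)=\frac{x-y}{\log x-\log y}$, identric mean $I(x,y)=\frac{1}{e}\left(\frac{x^x}{y^y}\right)^{1/(x-y)}$. *)

theory Defs
  imports Complex_Main
begin

definition AM :: "real \<Rightarrow> real \<Rightarrow> real" where
  "AM x y = (x + y) / 2"

definition GM :: "real \<Rightarrow> real \<Rightarrow> real" where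
  "GM x y = sqrt (x * y)"

definition LM :: "real \<Rightarrow> real \<Rightarrow> real" where
  "LM x y = (x - y) / (ln x - ln y)"

definition IM :: "real \<Rightarrow> real \<Rightarrow> real" where
  "IM x y = (1 / exp 1) * ((x powr x) / (y powr y)) powr (1 / (x - y))"

end

theory Submission
  imports Defs "HOL-Real_Asymp.Real_Asymp"
begin

lemma pos_from0:
  fixes f f' :: "real \<Rightarrow> real"
  assumes "f 0 = 0" "continuous_on {0..t} f" "\<And>x. x > 0 \<Longrightarrow> (f has_real_derivative f' x) (at x)"
    "\<And>x. x > 0 \<Longrightarrow> f' x > 0" "t > 0"
  shows "f t > 0"
  using DERIV_pos_imp_increasing_open[of 0 t f] assms by force

lemma pos_from_lim:
  fixes f f' :: "real \<Rightarrow> real"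
  assumes "(f \<longlongrightarrow> 0) (at_right 0)" "\<And>x. x > 0 \<Longrightarrow> (f has_real_derivative f' x) (at x)"
    "\<And>x. x > 0 \<Longrightarrow> f' x > 0" "t > 0"
  shows "f t > 0"
proof -
  have inc: "f s < f u" if "0 < s" "s < u" for s u
  proof (rule DERIV_pos_imp_increasing[OF that(2)])
    fix x assume "s \<le> x" "x \<le> u"
    with that have "x > 0" by simp
    then show "\<exists>y. (f has_real_derivative y) (at x) \<and> 0 < y" using assms(2,3) by blast
  qed
  have ev: "eventually (\<lambda>x. f x \<le> f (t/2)) (at_right 0)"
    unfolding eventually_at_right_field
    using assms(4) inc by (intro exI[of _ "t/2"]) (auto intro: less_imp_le)
  have "0 \<le> f (t/2)"
    by (rule tendsto_upperbound[OF assms(1) ev]) simp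
  also have "f (t/2) < f t" using inc assms(4) by simp
  finally show ?thesis .
qed

lemma cosh_p1 [simp]: "cosh (x::real) + 1 > 0" "1 + cosh x > 0" "cosh x + 1 \<noteq> 0" "1 + cosh x \<noteq> 0"
  using cosh_real_pos[of x] by linarith+

lemma cosh_gt1: "t > 0 \<Longrightarrow> cosh (t::real) > 1"
  using cosh_real_ge_1[of t] cosh_real_one_iff[of t] by linarith

lemma sinh_gt: assumes "t > 0" shows "t < sinh (t::real)"
proof -
  have "(\<lambda>x. sinh x - x) t > 0"
    by (rule pos_from0[where f="\<lambda>x. sinh x - x" and f'="\<lambda>x. cosh x - 1"])
       (auto intro!: derivative_eq_intros continuous_intros simp: cosh_gt1 assms)
  then show ?thesis by simp
qed

lemma tcosh_gt: assumes "t > 0" shows "sinh t < t * cosh (t::real)"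
proof -
  have "(\<lambda>x. x * cosh x - sinh x) t > 0"
    by (rule pos_from0[where f="\<lambda>x. x * cosh x - sinh x" and f'="\<lambda>x. x * sinh x"])
       (auto intro!: derivative_eq_intros continuous_intros simp: assms)
  then show ?thesis by simp
qed

lemma lemD: assumes "t > 0" shows "2 * sinh t < t * (cosh (t::real) + 1)"
proof -
  have g: "0 < x * sinh x - cosh x + 1" if "x > 0" for x :: real
    by (rule pos_from0[where f="\<lambda>x. x * sinh x - cosh x + 1" and f'="\<lambda>x. x * cosh x"])
       (auto intro!: derivative_eq_intros continuous_intros simp: that)
  have g': "cosh x < 1 + x * sinh x" if "x > 0" for x :: real using g[OF that] by simp
  have "(\<lambda>x. x * (cosh x + 1) - 2 * sinh x) t > 0"
    by (rule pos_from0[where f="\<lambda>x. x * (cosh x + 1) - 2 * sinh x" and f'="\<lambda>x. x * sinh x - cosh x + 1"])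
       (auto intro!: derivative_eq_intros continuous_intros simp: assms g' algebra_simps)
  then show ?thesis by simp
qed

lemma sh2: "sinh x * sinh x = cosh x * cosh x - (1::real)"
  using cosh_square_eq[of x] by (simp add: power2_eq_square)

lemma idE: "C > 0 \<Longrightarrow> (S + x)*(C+1)/((C+1)*(C+1)) - S/C = (x*C - S)/(C*(C+1::real))"
proof -
  assume "C > 0"
  then have a: "C + 1 > 0" by linarith
  then have e: "(S + x)*(C+1)/((C+1)*(C+1)) = (S+x)/(C+1)" by simp
  show ?thesis unfolding e using \<open>C>0\<close> a by (simp add: field_simps)
qed

lemma lemE: assumes "t > 0" shows "ln (cosh t) < t * sinh t / (cosh (t::real) + 1)"
proof -
  have "(\<lambda>x. x * sinh x / (cosh x + 1) - ln (cosh x)) t > 0"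
  proof (rule pos_from0[where f="\<lambda>x. x * sinh x / (cosh x + 1) - ln (cosh x)"
        and f'="\<lambda>x. (x * cosh x - sinh x) / (cosh x * (cosh x + 1))"])
    fix x :: real assume x: "x > 0"
    have p: "cosh x + 1 > 0" using cosh_real_pos[of x] by linarith
    have p': "cosh x + 1 \<noteq> 0" using p by linarith
    have num: "(sinh x + cosh x * x) * (cosh x + 1) - x * sinh x * sinh x = (sinh x + x) * (cosh x + 1)"
      using sh2[of x] by algebra
    show "((\<lambda>x::real. x * sinh x / (cosh x + 1) - ln (cosh x)) has_real_derivative
          (x * cosh x - sinh x) / (cosh x * (cosh x + 1))) (at x)"
      using p apply (auto intro!: derivative_eq_intros)
      apply (subst num)
      by (rule idE) simp
    show "(x * cosh x - sinh x) / (cosh x * (cosh x + 1)) > 0"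
      using tcosh_gt[OF x] p by (intro divide_pos_pos mult_pos_pos) auto
  qed (auto intro!: continuous_intros simp: assms add_pos_pos)
  then show ?thesis by simp
qed

lemma idW: "C > 0 \<Longrightarrow> S + (S+x)*(C+1)/((C+1)*(C+1)) - 2*x = (S*C + 2*S - x - 2*x*C)/(C+1::real)"
proof -
  assume "C > 0"
  then have a: "C + 1 > 0" by linarith
  then have e: "(S + x)*(C+1)/((C+1)*(C+1)) = (S+x)/(C+1)" by simp
  show ?thesis unfolding e using \<open>C>0\<close> a by (simp add: field_simps)
qed

lemma idK: "C+1 \<noteq> 0 \<Longrightarrow> S*S = C*C - 1 \<Longrightarrow> S*S + t*S - t*t*(1+C) = (C+1)*(C-1 + t*S/(C+1) - t*t::real)"
proof -
  assume a: "C+1 \<noteq> 0" and b: "S*S = C*C - 1"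
  define q where "q = t*S/(C+1)"
  have c: "(C+1)*q = t*S" using a unfolding q_def by simp
  show ?thesis unfolding q_def[symmetric] using b c by algebra
qed

lemma lemV: assumes "t > 0"
  shows "0 < sinh t * cosh t + 2 * sinh t - t - 2 * t * cosh (t::real)"
proof (rule pos_from0[where f="\<lambda>x. sinh x * cosh x + 2 * sinh x - x - 2 * x * cosh x"
        and f'="\<lambda>x. 2 * sinh x * (sinh x - x)"])
  fix x :: real assume x: "x > 0"
  show "((\<lambda>x::real. sinh x * cosh x + 2 * sinh x - x - 2 * x * cosh x) has_real_derivative
          2 * sinh x * (sinh x - x)) (at x)"
    apply (auto intro!: derivative_eq_intros)
    using sh2[of x] by algebra
  show "2 * sinh x * (sinh x - x) > 0" using sinh_gt[OF x] x by simp
qed (auto intro!: continuous_intros simp: assms)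

lemma lemK: assumes "t > 0"
  shows "0 < sinh t * sinh t + t * sinh t - t * t * (1 + cosh (t::real))"
proof -
  have "0 < cosh t - 1 + t * sinh t / (cosh t + 1) - t * t"
  proof (rule pos_from0[where f="\<lambda>x. cosh x - 1 + x * sinh x / (cosh x + 1) - x * x"
        and f'="\<lambda>x. (sinh x * cosh x + 2 * sinh x - x - 2 * x * cosh x) / (cosh x + 1)"])
    fix x :: real assume x: "x > 0"
    have p: "cosh x + 1 > 0" using cosh_real_pos[of x] by linarith
    have num: "(sinh x + cosh x * x) * (cosh x + 1) - x * sinh x * sinh x = (sinh x + x) * (cosh x + 1)"
      using sh2[of x] by algebra
    show "((\<lambda>x::real. cosh x - 1 + x * sinh x / (cosh x + 1) - x * x) has_real_derivative
          (sinh x * cosh x + 2 * sinh x - x - 2 * x * cosh x) / (cosh x + 1)) (at x)"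
      using p apply (auto intro!: derivative_eq_intros)
      apply (subst num)
      by (rule idW) simp
    show "(sinh x * cosh x + 2 * sinh x - x - 2 * x * cosh x) / (cosh x + 1) > 0"
      using lemV[OF x] p by simp
  qed (auto intro!: continuous_intros simp: assms add_pos_pos)
  moreover have "sinh t * sinh t + t * sinh t - t * t * (1 + cosh t)
     = (cosh t + 1) * (cosh t - 1 + t * sinh t / (cosh t + 1) - t * t)"
    using idK[OF cosh_p1(3) sh2[of t]] .
  ultimately show ?thesis using cosh_real_pos[of t] by (simp add: add_pos_pos)
qed

lemma idH:
  fixes x S C :: real
  assumes "x > 0" "S > 0" "S*S = C*C - 1"
  shows "((C + S*x)*S - x*C*C)/(S*S) - (C*x - S)/(S*x) + (S - x*C)/(S*S) = (S*S + x*S - x*x*(1+C))/(x*(S*S))"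
proof -
  have n: "(C + S*x)*S - x*C*C = C*S - x" using assms(3) by algebra
  show ?thesis unfolding n using assms(1,2) by (simp add: field_simps)
qed

lemma idG:
  fixes x S C n :: real
  assumes "x > 0" "S > 0" "S*S = C*C - 1" "n > 0" "n * x = x + C*x - S"
  shows "(S - (C*x - S)/(x*x))/n - ((C + S*x)*S - x*C*C)/(S*S) = (S - x)*(S*S + x*S - x*x*(1+C))/(x*x*n*(S*S))"
proof -
  have e: "(C + S*x)*S - x*C*C = C*S - x" using assms(3) by algebra
  show ?thesis unfolding e using assms(1,2,4) apply (simp add: field_simps)
    using assms(3,5) by algebra
qed

lemma N_pos: "t > 0 \<Longrightarrow> 0 < 1 + cosh t - sinh t / (t::real)"
proof -
  assume t: "t > 0"
  have "sinh t / t < (cosh t + 1) / 2" using lemD[OF t] t by (simp add: field_simps)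
  moreover have "0 < cosh t + 1" by simp
  ultimately show ?thesis by argo
qed

lemma alzer: assumes "t > 0"
  shows "t * cosh t / sinh t - 1 < ln (1 + cosh t - sinh t / (t::real))"
proof -
  have "0 < ln (1 + cosh t - sinh t / t) - t * cosh t / sinh t + 1"
  proof (rule pos_from_lim[where f="\<lambda>x. ln (1 + cosh x - sinh x / x) - x * cosh x / sinh x + 1"
        and f'="\<lambda>x. (sinh x - x) * (sinh x * sinh x + x * sinh x - x * x * (1 + cosh x))
                   / (x * x * (1 + cosh x - sinh x / x) * (sinh x * sinh x))"])
    show "((\<lambda>x::real. ln (1 + cosh x - sinh x / x) - x * cosh x / sinh x + 1) \<longlongrightarrow> 0) (at_right 0)"
      unfolding sinh_field_def cosh_field_def by real_asymp
    fix x :: real assume x: "x > 0"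
    have N: "0 < 1 + cosh x - sinh x / x" by (rule N_pos[OF x])
    show "((\<lambda>x::real. ln (1 + cosh x - sinh x / x) - x * cosh x / sinh x + 1) has_real_derivative
      (sinh x - x) * (sinh x * sinh x + x * sinh x - x * x * (1 + cosh x))
                   / (x * x * (1 + cosh x - sinh x / x) * (sinh x * sinh x))) (at x)"
      using x N apply (auto intro!: derivative_eq_intros)
      apply (rule idG)
      using x N sh2[of x] by (auto simp: field_simps)
    show "0 < (sinh x - x) * (sinh x * sinh x + x * sinh x - x * x * (1 + cosh x))
                   / (x * x * (1 + cosh x - sinh x / x) * (sinh x * sinh x))"
      using sinh_gt[OF x] lemK[OF x] N x by (intro divide_pos_pos mult_pos_pos) auto
  qed (use assms in auto)
  then show ?thesis by simp
qed

lemma lemH: assumes "t > 0"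
  shows "1 - t / sinh t < t * cosh t / sinh t - 1 - ln (sinh t / (t::real))"
proof -
  have "0 < t * cosh t / sinh t - 2 - ln (sinh t / t) + t / sinh t"
  proof (rule pos_from_lim[where f="\<lambda>x. x * cosh x / sinh x - 2 - ln (sinh x / x) + x / sinh x"
        and f'="\<lambda>x. (sinh x * sinh x + x * sinh x - x * x * (1 + cosh x)) / (x * (sinh x * sinh x))"])
    show "((\<lambda>x::real. x * cosh x / sinh x - 2 - ln (sinh x / x) + x / sinh x) \<longlongrightarrow> 0) (at_right 0)"
      unfolding sinh_field_def cosh_field_def by real_asymp
    fix x :: real assume x: "x > 0"
    show "((\<lambda>x::real. x * cosh x / sinh x - 2 - ln (sinh x / x) + x / sinh x) has_real_derivative
      (sinh x * sinh x + x * sinh x - x * x * (1 + cosh x)) / (x * (sinh x * sinh x))) (at x)"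
      using x apply (auto intro!: derivative_eq_intros)
      apply (rule idH)
      using x sh2[of x] by auto
    show "0 < (sinh x * sinh x + x * sinh x - x * x * (1 + cosh x)) / (x * (sinh x * sinh x))"
      using lemK[OF x] x by (intro divide_pos_pos mult_pos_pos) auto
  qed (use assms in auto)
  then show ?thesis by simp
qed

lemma LM_sym: "LM x y = LM y x"
proof -
  have "y - x = -(x-y)" "ln y - ln x = -(ln x - ln y)" by simp_all
  then show ?thesis unfolding LM_def by (simp only: minus_divide_divide)
qed

lemma IM_eq: assumes "x > 0" "y > 0"
  shows "IM x y = exp ((x * ln x - y * ln y) / (x - y) - 1)"
proof -
  have Q: "x powr x / y powr y = exp (x * ln x - y * ln y)"
    using assms by (simp add: powr_def exp_diff)
  have P: "exp (x * ln x - y * ln y) powr (1 / (x - y)) = exp ((x * ln x - y * ln y) / (x - y))"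
    by (simp add: powr_def)
  show ?thesis unfolding IM_def Q P by (simp add: exp_diff)
qed

lemma IM_sym: "x > 0 \<Longrightarrow> y > 0 \<Longrightarrow> IM x y = IM y x"
proof -
  assume a: "x > 0" "y > 0"
  have "(x * ln x - y * ln y) / (x - y) = (y * ln y - x * ln x) / (y - x)"
  proof -
    have "y * ln y - x * ln x = -(x * ln x - y * ln y)" "y - x = -(x-y)" by simp_all
    then show ?thesis by (simp only: minus_divide_divide)
  qed
  then show ?thesis using a by (simp add: IM_eq)
qed

lemma LM_scale: "c > 0 \<Longrightarrow> x > 0 \<Longrightarrow> y > 0 \<Longrightarrow> LM (c * x) (c * y) = c * LM x y"
  unfolding LM_def by (simp add: ln_mult right_diff_distrib[symmetric])

lemma LM_sq: assumes "x > 0" "y > 0" "x \<noteq> y"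
  shows "LM (x^2) (y^2) = (x + y) / 2 * LM x y"
proof -
  have "ln x \<noteq> ln y" using assms by simp
  then have "ln x - ln y \<noteq> 0" by simp
  moreover have "ln (x^2) = 2 * ln x" "ln (y^2) = 2 * ln y" using assms by (simp_all add: ln_realpow)
  ultimately show ?thesis unfolding LM_def by (simp add: field_simps power2_eq_square)
qed

lemma ln_lt: "x > 0 \<Longrightarrow> x \<noteq> 1 \<Longrightarrow> ln x < x - (1::real)"
  using ln_le_minus_one ln_eq_minus_one by force

lemma LM_gt: assumes "0 < y" "y < x" shows "y < LM x y"
proof -
  have "ln (x / y) < x / y - 1" using assms by (intro ln_lt) auto
  then have "ln x - ln y < (x - y) / y" using assms by (simp add: ln_divide_pos diff_divide_distrib)
  then have "y * (ln x - ln y) < x - y" using assms by (simp add: field_simps)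
  moreover have "ln x - ln y > 0" using assms by simp
  ultimately show ?thesis unfolding LM_def by (simp add: field_simps)
qed

lemma main_ct:
  fixes c t :: real
  assumes c: "c > 0" and t: "t > 0"
  defines "a \<equiv> c * exp t" and "b \<equiv> c * exp (-t)"
  shows "LM ((AM a b)^2) ((GM a b)^2) = (AM a b + GM a b) / 2 * LM (AM a b) (GM a b)
       \<and> (AM a b + GM a b) / 2 * LM (AM a b) (GM a b) > (AM a b + GM a b) / 2 * LM a b
       \<and> (AM a b + GM a b) / 2 * LM a b > (LM a b)^2
       \<and> LM (IM a b) (GM a b) < LM a b
       \<and> LM a b < LM (IM a b) (LM a b)
       \<and> LM (IM a b) (LM a b) < LM a b * (IM a b - LM a b) / (LM a b - GM a b)"
proof -
  define S where "S = sinh t"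
  define C where "C = cosh t"
  define u where "u = t * C / S - 1"
  have S0: "S > 0" unfolding S_def using t by simp
  have C1: "C > 1" unfolding C_def using cosh_gt1[OF t] .
  have SS: "S * S = (C - 1) * (C + 1)" unfolding S_def C_def using sh2[of t] by (simp add: algebra_simps)
  have St: "t < S" unfolding S_def using sinh_gt[OF t] .
  have a0: "a > 0" and b0: "b > 0" unfolding a_def b_def using c by simp_all
  have la: "ln a = ln c + t" unfolding a_def using c by (simp add: ln_mult)
  have lb: "ln b = ln c - t" unfolding b_def using c by (simp add: ln_mult)
  have dab: "a - b = 2 * c * S" unfolding a_def b_def S_def sinh_field_def by (simp add: algebra_simps)
  have sab: "a + b = 2 * c * C" unfolding a_def b_def C_def cosh_field_def by (simp add: algebra_simps)
  have A: "AM a b = c * C" unfolding AM_def sab by simp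
  have G: "GM a b = c"
  proof -
    have "a * b = c * c" unfolding a_def b_def by (simp add: exp_minus field_simps)
    then show ?thesis unfolding GM_def using c by simp
  qed
  have L: "LM a b = c * S / t"
    unfolding LM_def la lb dab using t by (simp add: field_simps)
  have I: "IM a b = c * exp u"
  proof -
    have "a * ln a - b * ln b = (a - b) * ln c + t * (a + b)" unfolding la lb by (simp add: algebra_simps)
    also have "\<dots> = (a - b) * (ln c + t * C / S)" unfolding dab sab using S0 by (simp add: field_simps)
    finally have "(a * ln a - b * ln b) / (a - b) = ln c + t * C / S"
      using dab c S0 by simp
    moreover have "exp (ln c + t * C / S - 1) = exp (ln c) * exp (t * C / S - 1)"
      by (subst exp_add[symmetric]) (simp add: algebra_simps)
    ultimately show ?thesis unfolding IM_eq[OF a0 b0] u_def using c by simp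
  qed
  have u0: "u > 0" unfolding u_def using tcosh_gt[OF t] S0 unfolding S_def[symmetric] C_def[symmetric]
    by (simp add: field_simps)
  have c1: "LM ((AM a b)^2) ((GM a b)^2) = (AM a b + GM a b) / 2 * LM (AM a b) (GM a b)"
    unfolding A G using c C1 by (intro LM_sq) auto
  have lC: "ln C > 0" using C1 by simp
  have "ln C < t * S / (C + 1)" using lemE[OF t] unfolding S_def[symmetric] C_def[symmetric] .
  then have "S * ln C < S * (t * S / (C + 1))" using S0 by (rule mult_strict_left_mono)
  also have "\<dots> = t * (C - 1)" using SS C1 by (simp add: field_simps) algebra
  finally have "S / t < (C - 1) / ln C" using t lC by (simp add: field_simps)
  then have X: "c * (S / t) < c * ((C - 1) / ln C)" using c by (rule mult_strict_left_mono)
  have "LM (c * C) (c * 1) = c * ((C - 1) / ln C)"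
    using LM_scale[of c C 1] c C1 unfolding LM_def by simp
  then have "LM (AM a b) (GM a b) = c * ((C - 1) / ln C)" unfolding A G by simp
  moreover have "LM a b = c * (S / t)" unfolding L by simp
  ultimately have "LM (AM a b) (GM a b) > LM a b" using X by simp
  moreover have AG0: "(AM a b + GM a b) / 2 > 0" unfolding A G using c C1 by (simp add: add_pos_pos)
  ultimately have c2: "(AM a b + GM a b) / 2 * LM (AM a b) (GM a b) > (AM a b + GM a b) / 2 * LM a b"
    by simp
  have L0: "LM a b > 0" unfolding L using c S0 t by simp
  have "2 * S < t * (C + 1)" using lemD[OF t] unfolding S_def[symmetric] C_def[symmetric] .
  then have "c * (2 * S) < c * (t * (C + 1))" using c by (rule mult_strict_left_mono)
  then have "LM a b < (AM a b + GM a b) / 2" unfolding A G L using c t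
    by (simp add: field_simps)
  then have c3: "(AM a b + GM a b) / 2 * LM a b > (LM a b)^2" using L0
    by (simp add: power2_eq_square)
  have "u < ln (1 + C - S / t)" using alzer[OF t] unfolding u_def S_def[symmetric] C_def[symmetric] .
  then have "exp u < 1 + C - S / t" using N_pos[OF t] unfolding S_def[symmetric] C_def[symmetric]
    by (metis exp_less_cancel_iff exp_ln)
  moreover have "u * (S / t) = C - S / t" unfolding u_def using S0 t by (simp add: field_simps)
  ultimately have "(exp u - 1) / u < S / t" using u0 by (simp add: field_simps)
  then have X4: "c * ((exp u - 1) / u) < c * (S / t)" using c by (rule mult_strict_left_mono)
  have "LM (c * exp u) (c * 1) = c * ((exp u - 1) / u)"
    using LM_scale[of c "exp u" 1] c unfolding LM_def by simp
  then have "LM (IM a b) (GM a b) = c * ((exp u - 1) / u)" unfolding I G by simp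
  moreover have "LM a b = c * (S / t)" unfolding L by simp
  ultimately have c4: "LM (IM a b) (GM a b) < LM a b" using X4 by simp
  have I0: "IM a b > 0" unfolding I using c by simp
  have D: "ln (IM a b) - ln (LM a b) = u - ln (S / t)"
    unfolding I L using c S0 t by (simp add: ln_mult ln_div)
  have "1 - t / S < u - ln (S / t)" using lemH[OF t] unfolding u_def S_def[symmetric] C_def[symmetric] .
  moreover have "(LM a b - GM a b) / LM a b = 1 - t / S" unfolding L G using c S0 t by (simp add: field_simps)
  ultimately have Dgt: "ln (IM a b) - ln (LM a b) > (LM a b - GM a b) / LM a b"
    using D by linarith
  have LG: "(LM a b - GM a b) / LM a b > 0" unfolding L G using c S0 t St by (simp add: field_simps)
  have IL: "IM a b > LM a b"
  proof -
    have "ln (IM a b) > ln (LM a b)" using Dgt LG by linarith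
    then show ?thesis using I0 L0 by simp
  qed
  have c5: "LM a b < LM (IM a b) (LM a b)" using LM_gt[OF L0 IL] .
  have "LM (IM a b) (LM a b) = (IM a b - LM a b) / (ln (IM a b) - ln (LM a b))" unfolding LM_def ..
  also have "\<dots> < (IM a b - LM a b) / ((LM a b - GM a b) / LM a b)"
  proof (rule divide_strict_left_mono[OF Dgt])
    show "0 < IM a b - LM a b" using IL by simp
    show "0 < (ln (IM a b) - ln (LM a b)) * ((LM a b - GM a b) / LM a b)"
      using LG Dgt by (intro mult_pos_pos) auto
  qed
  also have "\<dots> = LM a b * (IM a b - LM a b) / (LM a b - GM a b)"
    using L0 LG by (simp add: field_simps)
  finally have c6: "LM (IM a b) (LM a b) < LM a b * (IM a b - LM a b) / (LM a b - GM a b)" .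
  show ?thesis using c1 c2 c3 c4 c5 c6 by blast
qed

lemma main_gt:
  fixes a b :: real
  assumes "b > 0" "b < a"
  shows "LM ((AM a b)^2) ((GM a b)^2) = (AM a b + GM a b) / 2 * LM (AM a b) (GM a b)
       \<and> (AM a b + GM a b) / 2 * LM (AM a b) (GM a b) > (AM a b + GM a b) / 2 * LM a b
       \<and> (AM a b + GM a b) / 2 * LM a b > (LM a b)^2
       \<and> LM (IM a b) (GM a b) < LM a b
       \<and> LM a b < LM (IM a b) (LM a b)
       \<and> LM (IM a b) (LM a b) < LM a b * (IM a b - LM a b) / (LM a b - GM a b)"
proof -
  have a0: "a > 0" using assms by simp
  define c where "c = exp ((ln a + ln b) / 2)"
  define t where "t = (ln a - ln b) / 2"
  have c0: "c > 0" unfolding c_def by simp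
  have t0: "t > 0" unfolding t_def using assms by simp
  have ea: "c * exp t = a" unfolding c_def t_def
    by (subst exp_add[symmetric]) (simp add: a0 field_simps)
  have eb: "c * exp (-t) = b" unfolding c_def t_def
    by (subst exp_add[symmetric]) (simp add: assms field_simps)
  show ?thesis using main_ct[OF c0 t0] unfolding ea eb .
qed


theorem theorem3:
  fixes a b :: real
  assumes "a > 0" and "b > 0" and "a \<noteq> b"
  shows "LM ((AM a b)^2) ((GM a b)^2) = (AM a b + GM a b) / 2 * LM (AM a b) (GM a b)
       \<and> (AM a b + GM a b) / 2 * LM (AM a b) (GM a b) > (AM a b + GM a b) / 2 * LM a b
       \<and> (AM a b + GM a b) / 2 * LM a b > (LM a b)^2
       \<and> LM (IM a b) (GM a b) < LM a b
       \<and> LM a b < LM (IM a b) (LM a b)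
       \<and> LM (IM a b) (LM a b) < LM a b * (IM a b - LM a b) / (LM a b - GM a b)"
proof (cases "b < a")
  case True
  show ?thesis using main_gt[OF assms(2) True] .
next
  case False
  then have ab: "a < b" using assms(3) by simp
  have sym: "AM b a = AM a b" "GM b a = GM a b" "LM b a = LM a b" "IM b a = IM a b"
    unfolding AM_def GM_def using LM_sym IM_sym[OF assms(2,1)] by (simp_all add: ac_simps)
  show ?thesis using main_gt[OF assms(1) ab] unfolding sym .
qed

end
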